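(* Let $x$ be a point of a topological space $X$. Then: (i) $X$ has a countable $cn$-network at $x$ if and only if there exist $\mathbf{M}_x\subseteq\mathbb{N}^\mathbb{N}$ and an $\mathbf{M}_x$-decreasing base $\mathcal{U}(x)=\{U_\alpha:\alpha\in\mathbf{M}_x\}$ of neighborhoods at $x$ satisfying the condition $(\mathbf{D})$; in that case the family $\mathcal{D}_{\mathcal{U}(x)}$ is a countable $cn$-network at $x$. (ii) $X$ has a countable $ck$-network at $x$ if and only if there exist $\mathbf{M}_x\subseteq\mathbb{N}^\mathbb{N}$ and an $\mathbf{M}_x$-decreasing base $\mathcal{U}(x)=\{U_\alpha:\alpha\in\mathbf{M}_x\}$ at $x$ satisfying $(\mathbf{D})$ such that $\mathcal{D}_{\mathcal{U}(x)}$ is a countable $ck$-network at $x$. (iii) $X$ has a countable $cp$-network at $x$ if and only if there exist $\mathbf{M}_x\subseteq\mathbb{N}^\mathbb{N}$ and an $\mathbf{M}_x$-decreasing base $\mathcal{U}(x)=\{U_\alpha:\alpha\in\mathbf{M}_x\}$ at $x$ satisfying $(\mathbf{D})$ such that $\mathcal{D}_{\mathcal{U}(x)}$ is a countable $cp$-network at $x$.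
   Context: $\mathbb{N}^\mathbb{N}$ carries the partial order $\alpha\le\beta$ iff $\alpha_i\le\beta_i$ for all $i$. For a subset $I$ of a partially ordered set, a family $\{A_i\}_{i\in I}$ of sets is $I$-decreasing if $A_j\subseteq A_i$ whenever $i\le j$ in $I$. For $\alpha\in\mathbb{N}^\mathbb{N}$ and $k\in\mathbb{N}$ let $I_k(\alpha)=\{\beta\in\mathbb{N}^\mathbb{N}:\beta_i=\alpha_i \text{ for } i=1,\dots,k\}$. For $\mathbf{M}\subseteq\mathbb{N}^\mathbb{N}$ and an $\mathbf{M}$-decreasing family $\mathcal{U}=\{U_\alpha:\alpha\in\mathbf{M}\}$ of subsets of a set, define $D_k(\alpha)=\bigcap_{\beta\in I_k(\alpha)\cap\mathbf{M}}U_\beta$ and $\mathcal{D}_\mathcal{U}=\{D_k(\alpha):\alpha\in\mathbf{M},k\in\mathbb{N}\}$ (a countable family). $\mathcal{U}$ satisfies condition $(\mathbf{D})$ if $U_\alpha=\bigcup_{k\in\mathbb{N}}D_k(\alpha)$ for every $\alpha\in\mathbf{M}$. For $x\in X$, a family $\mathcal{N}$ of subsets of $X$ is: a $cn$-network at $x$ if for each neighborhood $O_x$ of $x$ the set $\bigcup\{N\in\mathcal{N}:x\in N\subseteq O_x\}$ is a neighborhood of $x$; a $ck$-network at $x$ if for every neighborhood $O_x$ there is a neighborhood $U_x$ of $x$ such that for each compact $K\subseteq U_x$ there is a finite $\mathcal{F}\subseteq\mathcal{N}$ with $x\in\bigcap\mathcal{F}$ and $K\subseteq\bigcup\mathcal{F}\subseteq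 O_x$; a $cp$-network at $x$ if for every neighborhood $O_x$ there is $N\in\mathcal{N}$ with $x\in N\subseteq O_x$, and for every $A\subseteq X$ with $x\in\overline{A}\setminus A$ and every neighborhood $O_x$ there is $N\in\mathcal{N}$ with $x\in N\subseteq O_x$ and $N\cap A$ infinite. *)

theory Defs
  imports "HOL-Analysis.Analysis"
begin

definition nhd :: "'a::topological_space \<Rightarrow> 'a set \<Rightarrow> bool" where
  "nhd x N \<longleftrightarrow> (\<exists>V. open V \<and> x \<in> V \<and> V \<subseteq> N)"

text \<open>Elements of N^N are functions nat => nat; coordinate i (i = 1,2,...) of the paper is
  argument i-1 here. The order is the pointwise order on functions.\<close>
definition Ik :: "nat \<Rightarrow> (nat \<Rightarrow> nat) \<Rightarrow> (nat \<Rightarrow> nat) set" where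
  "Ik k \<alpha> = {\<beta>. \<forall>i<k. \<beta> i = \<alpha> i}"

definition decreasing_family :: "(nat \<Rightarrow> nat) set \<Rightarrow> ((nat \<Rightarrow> nat) \<Rightarrow> 'b set) \<Rightarrow> bool" where
  "decreasing_family M U \<longleftrightarrow> (\<forall>\<alpha>\<in>M. \<forall>\<beta>\<in>M. \<alpha> \<le> \<beta> \<longrightarrow> U \<beta> \<subseteq> U \<alpha>)"

definition nhd_base :: "'a::topological_space \<Rightarrow> (nat \<Rightarrow> nat) set \<Rightarrow> ((nat \<Rightarrow> nat) \<Rightarrow> 'a set) \<Rightarrow> bool" where
  "nhd_base x M U \<longleftrightarrow> (\<forall>\<alpha>\<in>M. nhd x (U \<alpha>)) \<and> (\<forall>W. nhd x W \<longrightarrow> (\<exists>\<alpha>\<in>M. U \<alpha> \<subseteq> W))"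

definition Dk :: "(nat \<Rightarrow> nat) set \<Rightarrow> ((nat \<Rightarrow> nat) \<Rightarrow> 'b set) \<Rightarrow> nat \<Rightarrow> (nat \<Rightarrow> nat) \<Rightarrow> 'b set" where
  "Dk M U k \<alpha> = (\<Inter>\<beta>\<in>Ik k \<alpha> \<inter> M. U \<beta>)"

definition DU :: "(nat \<Rightarrow> nat) set \<Rightarrow> ((nat \<Rightarrow> nat) \<Rightarrow> 'b set) \<Rightarrow> 'b set set" where
  "DU M U = {Dk M U k \<alpha> | k \<alpha>. \<alpha> \<in> M \<and> k \<ge> 1}"

definition condD :: "(nat \<Rightarrow> nat) set \<Rightarrow> ((nat \<Rightarrow> nat) \<Rightarrow> 'b set) \<Rightarrow> bool" where
  "condD M U \<longleftrightarrow> (\<forall>\<alpha>\<in>M. U \<alpha> = (\<Union>k\<in>{1..}. Dk M U k \<alpha>))"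

definition cn_network :: "'a::topological_space \<Rightarrow> 'a set set \<Rightarrow> bool" where
  "cn_network x \<N> \<longleftrightarrow>
     (\<forall>W. nhd x W \<longrightarrow> nhd x (\<Union>{N \<in> \<N>. x \<in> N \<and> N \<subseteq> W}))"

definition ck_network :: "'a::topological_space \<Rightarrow> 'a set set \<Rightarrow> bool" where
  "ck_network x \<N> \<longleftrightarrow>
     (\<forall>W. nhd x W \<longrightarrow> (\<exists>V. nhd x V \<and>
        (\<forall>K. compact K \<and> K \<subseteq> V \<longrightarrow>
           (\<exists>\<F>. finite \<F> \<and> \<F> \<subseteq> \<N> \<and> x \<in> \<Inter>\<F> \<and> K \<subseteq> \<Union>\<F> \<and> \<Union>\<F> \<subseteq> W))))"

definition cp_network :: "'a::topological_space \<Rightarrow> 'a set set \<Rightarrow> bool" where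
  "cp_network x \<N> \<longleftrightarrow>
     (\<forall>W. nhd x W \<longrightarrow> (\<exists>N\<in>\<N>. x \<in> N \<and> N \<subseteq> W)) \<and>
     (\<forall>A W. x \<in> closure A - A \<and> nhd x W \<longrightarrow>
        (\<exists>N\<in>\<N>. x \<in> N \<and> N \<subseteq> W \<and> infinite (N \<inter> A)))"

definition good_base :: "'a::topological_space \<Rightarrow> (nat \<Rightarrow> nat) set \<Rightarrow> ((nat \<Rightarrow> nat) \<Rightarrow> 'a set) \<Rightarrow> bool" where
  "good_base x M U \<longleftrightarrow> decreasing_family M U \<and> nhd_base x M U \<and> condD M U"

end

theory Submission
  imports Defs
begin

lemma nhd_mem: "nhd x S \<Longrightarrow> x \<in> S"
  by (auto simp: nhd_def)

lemma nhd_mono: "nhd x S \<Longrightarrow> S \<subseteq> T \<Longrightarrow> nhd x T"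
  by (auto simp: nhd_def)

lemma nhd_interior: "nhd x V \<longleftrightarrow> x \<in> interior V"
  by (auto simp: nhd_def interior_def)

lemma Dk_restrict: "Dk M U k \<alpha> = Dk M U k (\<lambda>i. if i < k then map \<alpha> [0..<k] ! i else 0)"
proof -
  have "Ik k \<alpha> = Ik k (\<lambda>i. if i < k then map \<alpha> [0..<k] ! i else 0)"
    by (auto simp: Ik_def)
  then show ?thesis by (simp add: Dk_def)
qed

lemma DU_countable: "countable (DU M U)"
proof -
  have "DU M U \<subseteq> (\<lambda>(k, l). Dk M U k (\<lambda>i. if i < k then l ! i else 0)) ` (UNIV :: (nat \<times> nat list) set)"
  proof
    fix D assume "D \<in> DU M U"
    then obtain k \<alpha> where D: "D = Dk M U k \<alpha>" by (auto simp: DU_def)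
    show "D \<in> (\<lambda>(k, l). Dk M U k (\<lambda>i. if i < k then l ! i else 0)) ` UNIV"
      by (rule image_eqI[where x="(k, map \<alpha> [0..<k])"]) (simp_all add: D Dk_restrict[of M U k \<alpha>])
  qed
  then show ?thesis by (rule countable_subset) simp
qed

lemma good_cn:
  assumes "good_base x M U"
  shows "cn_network x (DU M U)"
  unfolding cn_network_def
proof (intro allI impI)
  fix W assume W: "nhd x W"
  from assms have base: "nhd_base x M U" and cD: "condD M U"
    by (auto simp: good_base_def)
  from base W obtain \<alpha> where a: "\<alpha> \<in> M" "U \<alpha> \<subseteq> W" by (auto simp: nhd_base_def)
  have xU: "\<And>\<beta>. \<beta> \<in> M \<Longrightarrow> x \<in> U \<beta>" using base nhd_mem by (auto simp: nhd_base_def)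
  have "U \<alpha> \<subseteq> \<Union>{N \<in> DU M U. x \<in> N \<and> N \<subseteq> W}"
  proof
    fix y assume "y \<in> U \<alpha>"
    with cD a obtain k where k: "k \<ge> 1" "y \<in> Dk M U k \<alpha>" by (auto simp: condD_def)
    have sub: "Dk M U k \<alpha> \<subseteq> U \<alpha>" using a by (auto simp: Dk_def Ik_def)
    have "x \<in> Dk M U k \<alpha>" using xU by (auto simp: Dk_def)
    moreover have "Dk M U k \<alpha> \<in> DU M U" using a k by (auto simp: DU_def)
    ultimately show "y \<in> \<Union>{N \<in> DU M U. x \<in> N \<and> N \<subseteq> W}"
      using k sub a by blast
  qed
  moreover have "nhd x (U \<alpha>)" using base a by (auto simp: nhd_base_def)
  ultimately show "nhd x (\<Union>{N \<in> DU M U. x \<in> N \<and> N \<subseteq> W})" using nhd_mono by blast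
qed

lemma construct:
  assumes cN: "countable \<N>" and cn: "cn_network x \<N>"
  shows "\<exists>M U. good_base x M U \<and> (\<forall>W N. nhd x W \<and> N \<in> \<N> \<and> x \<in> N \<and> N \<subseteq> W \<longrightarrow>
           (\<exists>D\<in>DU M U. N \<subseteq> D \<and> D \<subseteq> W \<and> x \<in> D))"
proof -
  define E where "E = {N \<in> \<N>. x \<in> N}"
  have "nhd x UNIV" by (auto simp: nhd_def)
  with cn have "nhd x (\<Union>{N \<in> \<N>. x \<in> N \<and> N \<subseteq> UNIV})" by (auto simp: cn_network_def)
  then have "E \<noteq> {}" using nhd_mem unfolding E_def by fastforce
  moreover have "countable E" using cN unfolding E_def by simp
  ultimately have rE: "range (from_nat_into E) = E" by (rule range_from_nat_into)
  define f where "f = from_nat_into E"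
  have fE: "\<And>n. f n \<in> E" using rE unfolding f_def by blast
  have Ef: "\<And>N. N \<in> E \<Longrightarrow> \<exists>n. f n = N" using rE unfolding f_def by (metis rangeE)
  define U :: "(nat \<Rightarrow> nat) \<Rightarrow> 'a set" where "U \<alpha> = \<Union>{f n | n. \<alpha> n = 0}" for \<alpha>
  define aW :: "'a set \<Rightarrow> nat \<Rightarrow> nat" where "aW W = (\<lambda>n. if f n \<subseteq> W then 0 else 1)" for W
  define M where "M = aW ` {W. nhd x W}"
  have UaW: "U (aW W) = \<Union>{N \<in> \<N>. x \<in> N \<and> N \<subseteq> W}" for W
  proof
    show "U (aW W) \<subseteq> \<Union>{N \<in> \<N>. x \<in> N \<and> N \<subseteq> W}"
      using fE unfolding U_def aW_def E_def by (auto split: if_splits)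
    show "\<Union>{N \<in> \<N>. x \<in> N \<and> N \<subseteq> W} \<subseteq> U (aW W)"
    proof
      fix y assume "y \<in> \<Union>{N \<in> \<N>. x \<in> N \<and> N \<subseteq> W}"
      then obtain N where N: "N \<in> \<N>" "x \<in> N" "N \<subseteq> W" "y \<in> N" by blast
      then obtain n where "f n = N" using Ef unfolding E_def by blast
      then show "y \<in> U (aW W)" using N unfolding U_def aW_def by auto
    qed
  qed
  have Unhd: "\<And>\<alpha>. \<alpha> \<in> M \<Longrightarrow> nhd x (U \<alpha>)"
    using cn UaW unfolding M_def cn_network_def by auto
  have xU: "\<And>\<beta>. \<beta> \<in> M \<Longrightarrow> x \<in> U \<beta>" using Unhd nhd_mem by blast
  have key: "f n \<subseteq> Dk M U (Suc n) \<alpha> \<and> Dk M U (Suc n) \<alpha> \<subseteq> U \<alpha>" if "\<alpha> \<in> M" "\<alpha> n = 0" for \<alpha> n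
  proof
    show "f n \<subseteq> Dk M U (Suc n) \<alpha>"
    proof
      fix y assume y: "y \<in> f n"
      show "y \<in> Dk M U (Suc n) \<alpha>" unfolding Dk_def
      proof
        fix \<beta> assume "\<beta> \<in> Ik (Suc n) \<alpha> \<inter> M"
        then have "\<beta> n = 0" using that by (auto simp: Ik_def)
        then show "y \<in> U \<beta>" using y unfolding U_def by blast
      qed
    qed
    show "Dk M U (Suc n) \<alpha> \<subseteq> U \<alpha>" using that by (auto simp: Dk_def Ik_def)
  qed
  have dec: "decreasing_family M U"
    unfolding decreasing_family_def
  proof (intro ballI impI)
    fix \<alpha> \<beta> assume "\<alpha> \<in> M" "\<beta> \<in> M" "\<alpha> \<le> \<beta>"
    then have "\<And>n. \<beta> n = 0 \<Longrightarrow> \<alpha> n = 0" by (metis le_funD le_zero_eq)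
    then show "U \<beta> \<subseteq> U \<alpha>" unfolding U_def by blast
  qed
  have nb: "nhd_base x M U"
    unfolding nhd_base_def
  proof (intro conjI ballI allI impI)
    fix \<alpha> assume "\<alpha> \<in> M" then show "nhd x (U \<alpha>)" by (rule Unhd)
  next
    fix W assume "nhd x W"
    then have "aW W \<in> M" "U (aW W) \<subseteq> W" unfolding M_def by (auto simp: UaW)
    then show "\<exists>\<alpha>\<in>M. U \<alpha> \<subseteq> W" by blast
  qed
  have cD: "condD M U"
    unfolding condD_def
  proof (intro ballI equalityI subsetI)
    fix \<alpha> y assume a: "\<alpha> \<in> M" and "y \<in> U \<alpha>"
    then obtain n where n: "\<alpha> n = 0" "y \<in> f n" unfolding U_def by blast
    with key[OF a n(1)] have "y \<in> Dk M U (Suc n) \<alpha>" by blast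
    then show "y \<in> (\<Union>k\<in>{1..}. Dk M U k \<alpha>)" by force
  next
    fix \<alpha> y assume a: "\<alpha> \<in> M" and "y \<in> (\<Union>k\<in>{1..}. Dk M U k \<alpha>)"
    then show "y \<in> U \<alpha>" by (auto simp: Dk_def Ik_def)
  qed
  have extra: "\<exists>D\<in>DU M U. N \<subseteq> D \<and> D \<subseteq> W \<and> x \<in> D"
    if W: "nhd x W" and N: "N \<in> \<N>" "x \<in> N" "N \<subseteq> W" for W N
  proof -
    obtain n where fn: "f n = N" using Ef N unfolding E_def by blast
    have a: "aW W \<in> M" using W unfolding M_def by blast
    have a0: "aW W n = 0" using fn N unfolding aW_def by simp
    have "U (aW W) \<subseteq> W" by (auto simp: UaW)
    moreover have "Dk M U (Suc n) (aW W) \<in> DU M U" using a unfolding DU_def by force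
    ultimately show ?thesis using key[OF a a0] fn N by blast
  qed
  show ?thesis using dec nb cD extra unfolding good_base_def by blast
qed

lemma ck_cn: "ck_network x \<N> \<Longrightarrow> cn_network x \<N>"
  unfolding cn_network_def
proof (intro allI impI)
  fix W assume ck: "ck_network x \<N>" and W: "nhd x W"
  then obtain V where V: "nhd x V" and P: "\<And>K. compact K \<and> K \<subseteq> V \<Longrightarrow>
     (\<exists>\<F>. finite \<F> \<and> \<F> \<subseteq> \<N> \<and> x \<in> \<Inter>\<F> \<and> K \<subseteq> \<Union>\<F> \<and> \<Union>\<F> \<subseteq> W)"
    unfolding ck_network_def by blast
  have "V \<subseteq> \<Union>{N \<in> \<N>. x \<in> N \<and> N \<subseteq> W}"
  proof
    fix y assume "y \<in> V"
    then obtain \<F> where "finite \<F>" "\<F> \<subseteq> \<N>" "x \<in> \<Inter>\<F>" "{y} \<subseteq> \<Union>\<F>" "\<Union>\<F> \<subseteq> W"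
      using P[of "{y}"] by auto
    then show "y \<in> \<Union>{N \<in> \<N>. x \<in> N \<and> N \<subseteq> W}" by blast
  qed
  with V show "nhd x (\<Union>{N \<in> \<N>. x \<in> N \<and> N \<subseteq> W})" using nhd_mono by blast
qed

lemma cp_cn: "cp_network x \<N> \<Longrightarrow> cn_network x \<N>"
  unfolding cn_network_def
proof (intro allI impI)
  fix W assume cp: "cp_network x \<N>" and W: "nhd x W"
  define V where "V = \<Union>{N \<in> \<N>. x \<in> N \<and> N \<subseteq> W}"
  show "nhd x V"
  proof (rule ccontr)
    assume nn: "\<not> nhd x V"
    have "x \<in> V" using cp W unfolding cp_network_def V_def by blast
    moreover have "x \<in> closure (- V)" using nn by (simp add: nhd_interior closure_complement)
    ultimately have "x \<in> closure (- V) - (- V)" by simp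
    then obtain N where "N \<in> \<N>" "x \<in> N" "N \<subseteq> W" "infinite (N \<inter> - V)"
      using cp W unfolding cp_network_def by blast
    moreover have "N \<subseteq> V" using calculation unfolding V_def by blast
    then have "N \<inter> - V = {}" by blast
    with calculation show False by (metis finite.emptyI)
  qed
qed

lemma L3:
  assumes cN: "countable \<N>" and ck: "ck_network x \<N>"
  shows "\<exists>M U. good_base x M U \<and> countable (DU M U) \<and> ck_network x (DU M U)"
proof -
  obtain M U where gg: "good_base x M U \<and> (\<forall>W N. nhd x W \<and> N \<in> \<N> \<and> x \<in> N \<and> N \<subseteq> W \<longrightarrow>
           (\<exists>D\<in>DU M U. N \<subseteq> D \<and> D \<subseteq> W \<and> x \<in> D))"
    using construct[OF cN ck_cn[OF ck]] by (elim exE)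
  have g: "good_base x M U" using gg by (rule conjunct1)
  have ex: "\<exists>D\<in>DU M U. N \<subseteq> D \<and> D \<subseteq> W \<and> x \<in> D"
    if "nhd x W" "N \<in> \<N>" "x \<in> N" "N \<subseteq> W" for W N
    using conjunct2[OF gg] that by (simp only: simp_thms all_simps)
  have "ck_network x (DU M U)"
    unfolding ck_network_def
  proof (intro allI impI)
    fix W assume W: "nhd x W"
    from ck[unfolded ck_network_def, rule_format, OF W] obtain V where V: "nhd x V" and P0: "\<forall>K. compact K \<and> K \<subseteq> V \<longrightarrow>
       (\<exists>\<F>. finite \<F> \<and> \<F> \<subseteq> \<N> \<and> x \<in> \<Inter>\<F> \<and> K \<subseteq> \<Union>\<F> \<and> \<Union>\<F> \<subseteq> W)"
      by (elim exE conjE)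
    note P = P0[rule_format]
    show "\<exists>V. nhd x V \<and> (\<forall>K. compact K \<and> K \<subseteq> V \<longrightarrow>
           (\<exists>\<F>. finite \<F> \<and> \<F> \<subseteq> DU M U \<and> x \<in> \<Inter>\<F> \<and> K \<subseteq> \<Union>\<F> \<and> \<Union>\<F> \<subseteq> W))"
    proof (rule exI[where x=V], intro conjI allI impI)
      show "nhd x V" by (rule V)
      fix K assume "compact K \<and> K \<subseteq> V"
      from P[OF this] obtain \<F> where F: "finite \<F>" "\<F> \<subseteq> \<N>" "x \<in> \<Inter>\<F>" "K \<subseteq> \<Union>\<F>" "\<Union>\<F> \<subseteq> W"
        by (elim exE conjE)
      have ex2: "\<forall>N\<in>\<F>. \<exists>D. D \<in> DU M U \<and> N \<subseteq> D \<and> D \<subseteq> W \<and> x \<in> D"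
      proof
        fix N assume N: "N \<in> \<F>"
        then have "N \<in> \<N>" "x \<in> N" "N \<subseteq> W" using F by auto
        from ex[OF W this] show "\<exists>D. D \<in> DU M U \<and> N \<subseteq> D \<and> D \<subseteq> W \<and> x \<in> D" by blast
      qed
      from bchoice[OF ex2] obtain g where gp: "\<And>N. N \<in> \<F> \<Longrightarrow> g N \<in> DU M U \<and> N \<subseteq> g N \<and> g N \<subseteq> W \<and> x \<in> g N"
        by blast
      show "\<exists>\<F>'. finite \<F>' \<and> \<F>' \<subseteq> DU M U \<and> x \<in> \<Inter>\<F>' \<and> K \<subseteq> \<Union>\<F>' \<and> \<Union>\<F>' \<subseteq> W"
      proof (intro exI conjI)
        show "finite (g ` \<F>)" using F by simp
        have gp1: "g N \<in> DU M U" and gp2: "N \<subseteq> g N" and gp3: "g N \<subseteq> W" and gp4: "x \<in> g N"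
          if "N \<in> \<F>" for N using gp[OF that] by simp_all
        show "g ` \<F> \<subseteq> DU M U" using gp1 by (simp add: image_subset_iff)
        show "x \<in> \<Inter>(g ` \<F>)" using gp4 by simp
        show "\<Union>(g ` \<F>) \<subseteq> W" using gp3 by (simp add: UN_subset_iff)
        show "K \<subseteq> \<Union>(g ` \<F>)"
        proof
          fix y assume "y \<in> K"
          then obtain N where "N \<in> \<F>" "y \<in> N" using F(4) by blast
          then show "y \<in> \<Union>(g ` \<F>)" using gp2 by blast
        qed
      qed
    qed
  qed
  then show "\<exists>M U. good_base x M U \<and> countable (DU M U) \<and> ck_network x (DU M U)"
    using g DU_countable by blast
qed

lemma L4:
  assumes cN: "countable \<N>" and cp: "cp_network x \<N>"
  shows "\<exists>M U. good_base x M U \<and> countable (DU M U) \<and> cp_network x (DU M U)"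
proof -
  obtain M U where gg: "good_base x M U \<and> (\<forall>W N. nhd x W \<and> N \<in> \<N> \<and> x \<in> N \<and> N \<subseteq> W \<longrightarrow>
           (\<exists>D\<in>DU M U. N \<subseteq> D \<and> D \<subseteq> W \<and> x \<in> D))"
    using construct[OF cN cp_cn[OF cp]] by (elim exE)
  have g: "good_base x M U" using gg by (rule conjunct1)
  have ex: "\<exists>D\<in>DU M U. N \<subseteq> D \<and> D \<subseteq> W \<and> x \<in> D"
    if "nhd x W" "N \<in> \<N>" "x \<in> N" "N \<subseteq> W" for W N
    using conjunct2[OF gg] that by (simp only: simp_thms all_simps)
  have "cp_network x (DU M U)"
    unfolding cp_network_def
  proof (intro conjI allI impI)
    fix W assume W: "nhd x W"
    then obtain N where "N \<in> \<N>" "x \<in> N" "N \<subseteq> W" using cp unfolding cp_network_def by blast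
    from ex[OF W this] show "\<exists>N\<in>DU M U. x \<in> N \<and> N \<subseteq> W" by blast
  next
    fix A W assume AW: "x \<in> closure A - A \<and> nhd x W"
    then obtain N where N: "N \<in> \<N>" "x \<in> N" "N \<subseteq> W" "infinite (N \<inter> A)"
      using cp unfolding cp_network_def by blast
    from ex[OF conjunct2[OF AW] N(1-3)] obtain D where D: "D \<in> DU M U" "N \<subseteq> D" "D \<subseteq> W" "x \<in> D" by blast
    have "infinite (D \<inter> A)" using N(4) D(2) by (meson Int_mono finite_subset order_refl)
    then show "\<exists>N\<in>DU M U. x \<in> N \<and> N \<subseteq> W \<and> infinite (N \<inter> A)" using D by blast
  qed
  then show "\<exists>M U. good_base x M U \<and> countable (DU M U) \<and> cp_network x (DU M U)"
    using g DU_countable by blast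
qed

theorem mainTheorem3:
  fixes x :: "'a::topological_space"
  shows "((\<exists>\<N>. countable \<N> \<and> cn_network x \<N>) \<longleftrightarrow> (\<exists>M U. good_base x M U))
       \<and> (\<forall>M U. good_base x M U \<longrightarrow> countable (DU M U) \<and> cn_network x (DU M U))
       \<and> ((\<exists>\<N>. countable \<N> \<and> ck_network x \<N>) \<longleftrightarrow>
            (\<exists>M U. good_base x M U \<and> countable (DU M U) \<and> ck_network x (DU M U)))
       \<and> ((\<exists>\<N>. countable \<N> \<and> cp_network x \<N>) \<longleftrightarrow>
            (\<exists>M U. good_base x M U \<and> countable (DU M U) \<and> cp_network x (DU M U)))"
proof -
  have A: "(\<exists>\<N>. countable \<N> \<and> cn_network x \<N>) \<longleftrightarrow> (\<exists>M U. good_base x M U)"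
  proof
    assume "\<exists>\<N>. countable \<N> \<and> cn_network x \<N>"
    then obtain \<N> where "countable \<N>" "cn_network x \<N>" by blast
    from construct[OF this] show "\<exists>M U. good_base x M U" by blast
  next
    assume "\<exists>M U. good_base x M U"
    then obtain M U where "good_base x M U" by blast
    then have "countable (DU M U)" "cn_network x (DU M U)" using good_cn DU_countable by auto
    then show "\<exists>\<N>. countable \<N> \<and> cn_network x \<N>" by blast
  qed
  have B: "\<forall>M U. good_base x M U \<longrightarrow> countable (DU M U) \<and> cn_network x (DU M U)"
    using good_cn DU_countable by blast
  have C: "(\<exists>\<N>. countable \<N> \<and> ck_network x \<N>) \<longleftrightarrow>
            (\<exists>M U. good_base x M U \<and> countable (DU M U) \<and> ck_network x (DU M U))"
  proof
    assume "\<exists>\<N>. countable \<N> \<and> ck_network x \<N>"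
    then obtain \<N> where "countable \<N>" "ck_network x \<N>" by blast
    from L3[OF this] show "\<exists>M U. good_base x M U \<and> countable (DU M U) \<and> ck_network x (DU M U)" .
  next
    assume "\<exists>M U. good_base x M U \<and> countable (DU M U) \<and> ck_network x (DU M U)"
    then show "\<exists>\<N>. countable \<N> \<and> ck_network x \<N>" by blast
  qed
  have D: "(\<exists>\<N>. countable \<N> \<and> cp_network x \<N>) \<longleftrightarrow>
            (\<exists>M U. good_base x M U \<and> countable (DU M U) \<and> cp_network x (DU M U))"
  proof
    assume "\<exists>\<N>. countable \<N> \<and> cp_network x \<N>"
    then obtain \<N> where "countable \<N>" "cp_network x \<N>" by blast
    from L4[OF this] show "\<exists>M U. good_base x M U \<and> countable (DU M U) \<and> cp_network x (DU M U)" .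
  next
    assume "\<exists>M U. good_base x M U \<and> countable (DU M U) \<and> cp_network x (DU M U)"
    then show "\<exists>\<N>. countable \<N> \<and> cp_network x \<N>" by blast
  qed
  show ?thesis using A B C D by (intro conjI)
qed

end
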